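(* The Linear aTAM is not intrinsically universal: there is no finite 1D tile set $U$ (and temperature $\tau'$) with computable $\mathcal{R},S$ such that every Linear aTAM system $\mathcal{T}$ is simulated, at some scale $m$ under $\mathcal{R}(\mathcal{T})$, by the Linear aTAM system $(U,S(\mathcal{T}),\tau')$.
   Context: 1D aTAM: a tile type has a west glue and an east glue, each a pair (finite string label, nonnegative integer strength); a tile set is finite. Assemblies are partial functions $\alpha:\mathbb{Z}\dashrightarrow T$ with nonempty interval domain; adjacent tiles interact if the east glue of the left equals the west glue of the right with positive strength; $\alpha$ is $\tau$-stable if every cut between consecutive tiles has strength $\ge\tau$. A system $\mathcal{T}=(T,\sigma,\tau)$ has finite $\tau$-stable seed $\sigma$; growth is by single $\tau$-stable tile additions (finite or infinite sequences, result = limit). The Linear aTAM additionally requires that a tile can be added at empty location $p$ only if there is a path in $\mathbb{Z}$ from $p$ to a point outside the minimal bounding interval of the current assembly avoiding its domain. $\mathcal{A}[\mathcal{T}]$ are producible assemblies, $\mathcal{A}_\Box[\mathcal{T}]$ the producible ones admitting no further tile. Simulation: an $m$-block over $S$ is a partial function $\{0,\dots,m-1\}\dashrightarrow S$; $\alpha^m_x$ is $i\mapsto\alpha(mx+i)$. A partial $R$ from $m$-blocks to $T$ is valid if $\alpha\sqsubseteq\beta$, $\alpha\in\mathrm{dom}R$ imply $R(\beta)=R(\alpha)$; $R^*(\alpha')$ is $x\mapsto R(\alpha'^m_x)$. $\alpha'$ maps cleanly if each nonempty block at $x$ has $x$ or $x\pm1$ in $\mathrm{dom}\,R^*(\alpha')$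 (or at most one nonempty block). $\mathcal{S}$ simulates $\mathcal{T}$ under $R$ if: (i) $R^*$ maps $\mathcal{A}[\mathcal{S}]$ onto $\mathcal{A}[\mathcal{T}]$ and $\mathcal{A}_\Box[\mathcal{S}]$ onto $\mathcal{A}_\Box[\mathcal{T}]$, all producible assemblies mapping cleanly; (ii) producible $\alpha'\to^\mathcal{S}\beta'$ implies $R^*(\alpha')\to^\mathcal{T}R^*(\beta')$; (iii) for every $\alpha\in\mathcal{A}[\mathcal{T}]$ there is $\Pi\subset\mathcal{A}[\mathcal{S}]$ with $R^*=\alpha$ on $\Pi$ such that for every producible $\beta$ with $\alpha\to^\mathcal{T}\beta$: each $\alpha'\in\Pi$ produces some $\beta'$ with $R^*(\beta')=\beta$, and whenever producible $\alpha''\to^\mathcal{S}\beta'$ with $R^*(\alpha'')=\alpha$, $R^*(\beta')=\beta$, some $\alpha'\in\Pi$ produces $\alpha''$. *)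

theory Defs
  imports Main "HOL-Library.Nat_Bijection"
begin

(* a glue is a pair (label, strength); a tile type is a pair (west glue, east glue) *)
type_synonym glue = "string \<times> nat"
type_synonym tile = "glue \<times> glue"
type_synonym assembly = "int \<Rightarrow> tile option"
type_synonym system = "tile set \<times> assembly \<times> nat"

definition west :: "tile \<Rightarrow> glue" where "west t = fst t"
definition east :: "tile \<Rightarrow> glue" where "east t = snd t"

definition is_assembly :: "assembly \<Rightarrow> bool" where
  "is_assembly \<alpha> \<longleftrightarrow> dom \<alpha> \<noteq> {} \<and>
     (\<forall>x y z. x \<in> dom \<alpha> \<and> z \<in> dom \<alpha> \<and> x \<le> y \<and> y \<le> z \<longrightarrow> y \<in> dom \<alpha>)"

definition cut_strength :: "assembly \<Rightarrow> int \<Rightarrow> nat" where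
  "cut_strength \<alpha> i =
     (case (\<alpha> i, \<alpha> (i + 1)) of
        (Some s, Some t) \<Rightarrow> (if east s = west t then snd (east s) else 0)
      | _ \<Rightarrow> 0)"

definition tau_stable :: "nat \<Rightarrow> assembly \<Rightarrow> bool" where
  "tau_stable \<tau> \<alpha> \<longleftrightarrow>
     (\<forall>i. i \<in> dom \<alpha> \<and> i + 1 \<in> dom \<alpha> \<longrightarrow> cut_strength \<alpha> i \<ge> \<tau>)"

definition valid_system :: "system \<Rightarrow> bool" where
  "valid_system S \<longleftrightarrow> (case S of (T, \<sigma>, \<tau>) \<Rightarrow>
     finite T \<and> is_assembly \<sigma> \<and> finite (dom \<sigma>) \<and> ran \<sigma> \<subseteq> T \<and> tau_stable \<tau> \<sigma>)"

(* Linear aTAM condition: there is a path in Z from p to a point q outside the minimal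
   bounding interval of dom alpha, avoiding dom alpha; in Z such a path must cover
   the segment between p and q *)
definition linear_ok :: "assembly \<Rightarrow> int \<Rightarrow> bool" where
  "linear_ok \<alpha> p \<longleftrightarrow>
     (\<exists>q. \<not> (\<exists>a\<in>dom \<alpha>. \<exists>b\<in>dom \<alpha>. a \<le> q \<and> q \<le> b) \<and>
          (\<forall>r. min p q \<le> r \<and> r \<le> max p q \<longrightarrow> r \<notin> dom \<alpha>))"

definition lin_step :: "tile set \<Rightarrow> nat \<Rightarrow> assembly \<Rightarrow> assembly \<Rightarrow> bool" where
  "lin_step T \<tau> \<alpha> \<beta> \<longleftrightarrow>
     (\<exists>p t. \<alpha> p = None \<and> t \<in> T \<and> linear_ok \<alpha> p \<and>
            \<beta> = \<alpha>(p \<mapsto> t) \<and> is_assembly \<beta> \<and> tau_stable \<tau> \<beta>)"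

definition is_limit :: "(nat \<Rightarrow> assembly) \<Rightarrow> assembly \<Rightarrow> bool" where
  "is_limit f \<beta> \<longleftrightarrow>
     (\<forall>x. (\<beta> x = None \<longleftrightarrow> (\<forall>n. f n x = None)) \<and>
          (\<forall>n t. f n x = Some t \<longrightarrow> \<beta> x = Some t))"

(* alpha produces beta: finite or infinite sequence of single tile additions
   (finite sequences are represented by stuttering), result = limit *)
definition produces :: "tile set \<Rightarrow> nat \<Rightarrow> assembly \<Rightarrow> assembly \<Rightarrow> bool" where
  "produces T \<tau> \<alpha> \<beta> \<longleftrightarrow>
     (\<exists>f. f 0 = \<alpha> \<and> (\<forall>n. f (Suc n) = f n \<or> lin_step T \<tau> (f n) (f (Suc n))) \<and> is_limit f \<beta>)"

definition producible :: "system \<Rightarrow> assembly set" where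
  "producible S = (case S of (T, \<sigma>, \<tau>) \<Rightarrow> {\<beta>. produces T \<tau> \<sigma> \<beta>})"

definition terminal :: "system \<Rightarrow> assembly set" where
  "terminal S = (case S of (T, \<sigma>, \<tau>) \<Rightarrow>
     {\<alpha> \<in> producible S. \<not> (\<exists>\<beta>. lin_step T \<tau> \<alpha> \<beta>)})"

definition produces_in :: "system \<Rightarrow> assembly \<Rightarrow> assembly \<Rightarrow> bool" where
  "produces_in S \<alpha> \<beta> = (case S of (T, \<sigma>, \<tau>) \<Rightarrow> produces T \<tau> \<alpha> \<beta>)"

(* an m-block is modelled as a function nat => tile option vanishing outside {0..<m} *)
type_synonym block = "nat \<Rightarrow> tile option"

definition is_block :: "nat \<Rightarrow> tile set \<Rightarrow> block \<Rightarrow> bool" where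
  "is_block m U b \<longleftrightarrow> (\<forall>i. m \<le> i \<longrightarrow> b i = None) \<and> ran b \<subseteq> U"

definition block_at :: "nat \<Rightarrow> assembly \<Rightarrow> int \<Rightarrow> block" where
  "block_at m \<alpha> x = (\<lambda>i. if i < m then \<alpha> (int m * x + int i) else None)"

definition valid_repr :: "nat \<Rightarrow> tile set \<Rightarrow> (block \<Rightarrow> tile option) \<Rightarrow> bool" where
  "valid_repr m U R \<longleftrightarrow>
     (\<forall>a b. is_block m U a \<and> is_block m U b \<and> a \<subseteq>\<^sub>m b \<and> R a \<noteq> None \<longrightarrow> R b = R a)"

definition Rstar :: "nat \<Rightarrow> (block \<Rightarrow> tile option) \<Rightarrow> assembly \<Rightarrow> assembly" where
  "Rstar m R \<alpha> = (\<lambda>x. R (block_at m \<alpha> x))"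

definition maps_cleanly :: "nat \<Rightarrow> (block \<Rightarrow> tile option) \<Rightarrow> assembly \<Rightarrow> bool" where
  "maps_cleanly m R \<alpha> \<longleftrightarrow>
     (\<forall>x. block_at m \<alpha> x \<noteq> Map.empty \<longrightarrow>
          (\<exists>y\<in>{x - 1, x, x + 1}. y \<in> dom (Rstar m R \<alpha>)))
     \<or> (\<forall>x y. block_at m \<alpha> x \<noteq> Map.empty \<and> block_at m \<alpha> y \<noteq> Map.empty \<longrightarrow> x = y)"

definition simulates :: "system \<Rightarrow> nat \<Rightarrow> (block \<Rightarrow> tile option) \<Rightarrow> system \<Rightarrow> bool" where
  "simulates Ssys m R Tsys \<longleftrightarrow>
     valid_repr m (fst Ssys) R \<and>
     \<comment> \<open>(i)\<close>
     Rstar m R ` producible Ssys = producible Tsys \<and>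
     Rstar m R ` terminal Ssys = terminal Tsys \<and>
     (\<forall>\<alpha>' \<in> producible Ssys. maps_cleanly m R \<alpha>') \<and>
     \<comment> \<open>(ii)\<close>
     (\<forall>\<alpha>' \<beta>'. \<alpha>' \<in> producible Ssys \<and> produces_in Ssys \<alpha>' \<beta>' \<longrightarrow>
        produces_in Tsys (Rstar m R \<alpha>') (Rstar m R \<beta>')) \<and>
     \<comment> \<open>(iii)\<close>
     (\<forall>\<alpha> \<in> producible Tsys. \<exists>\<Pi> \<subseteq> producible Ssys.
        (\<forall>\<alpha>' \<in> \<Pi>. Rstar m R \<alpha>' = \<alpha>) \<and>
        (\<forall>\<beta>. \<beta> \<in> producible Tsys \<and> produces_in Tsys \<alpha> \<beta> \<longrightarrow>
           (\<forall>\<alpha>' \<in> \<Pi>. \<exists>\<beta>'. produces_in Ssys \<alpha>' \<beta>' \<and> Rstar m R \<beta>' = \<beta>) \<and>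
           (\<forall>\<alpha>'' \<beta>'. \<alpha>'' \<in> producible Ssys \<and> produces_in Ssys \<alpha>'' \<beta>' \<and>
                Rstar m R \<alpha>'' = \<alpha> \<and> Rstar m R \<beta>' = \<beta> \<longrightarrow>
                (\<exists>\<alpha>' \<in> \<Pi>. produces_in Ssys \<alpha>' \<alpha>''))))"

datatype recf = Zero | Succ | Proj nat | Comp recf "recf list" | PrimRec recf recf | Mu recf

inductive eval :: "recf \<Rightarrow> nat list \<Rightarrow> nat \<Rightarrow> bool" where
  eval_zero: "eval Zero xs 0"
| eval_succ: "eval Succ (x # xs) (Suc x)"
| eval_proj: "i < length xs \<Longrightarrow> eval (Proj i) xs (xs ! i)"
| eval_comp: "list_all2 (\<lambda>g y. eval g xs y) gs ys \<Longrightarrow> eval f ys z \<Longrightarrow> eval (Comp f gs) xs z"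
| eval_pr0: "eval f xs z \<Longrightarrow> eval (PrimRec f g) (0 # xs) z"
| eval_prS: "eval (PrimRec f g) (n # xs) y \<Longrightarrow> eval g (n # y # xs) z \<Longrightarrow>
             eval (PrimRec f g) (Suc n # xs) z"
| eval_mu: "eval f (n # xs) 0 \<Longrightarrow> (\<forall>k<n. \<exists>v. 0 < v \<and> eval f (k # xs) v) \<Longrightarrow>
            eval (Mu f) xs n"

definition enc_str :: "string \<Rightarrow> nat" where
  "enc_str s = list_encode (map of_char s)"
definition enc_glue :: "glue \<Rightarrow> nat" where
  "enc_glue g = prod_encode (enc_str (fst g), snd g)"
definition enc_tile :: "tile \<Rightarrow> nat" where
  "enc_tile t = prod_encode (enc_glue (fst t), enc_glue (snd t))"
definition enc_opt :: "tile option \<Rightarrow> nat" where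
  "enc_opt ot = (case ot of None \<Rightarrow> 0 | Some t \<Rightarrow> Suc (enc_tile t))"

definition code_tileset :: "nat \<Rightarrow> tile set \<Rightarrow> bool" where
  "code_tileset n T \<longleftrightarrow> (\<exists>xs. set xs = T \<and> n = list_encode (map enc_tile xs))"

definition code_asm :: "nat \<Rightarrow> assembly \<Rightarrow> bool" where
  "code_asm n \<alpha> \<longleftrightarrow> (\<exists>ps. set ps = {(x, t). \<alpha> x = Some t} \<and>
     n = list_encode (map (\<lambda>(x, t). prod_encode (int_encode x, enc_tile t)) ps))"

definition code_sys :: "nat \<Rightarrow> system \<Rightarrow> bool" where
  "code_sys n S \<longleftrightarrow> (case S of (T, \<sigma>, \<tau>) \<Rightarrow>
     (\<exists>a b. code_tileset a T \<and> code_asm b \<sigma> \<and> n = list_encode [a, b, \<tau>]))"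

definition code_block :: "nat \<Rightarrow> block \<Rightarrow> bool" where
  "code_block n b \<longleftrightarrow> (\<exists>xs. n = list_encode (map enc_opt xs) \<and>
     (\<forall>i. b i = (if i < length xs then xs ! i else None)))"

definition computable_S :: "(system \<Rightarrow> assembly) \<Rightarrow> bool" where
  "computable_S S \<longleftrightarrow> (\<exists>p. \<forall>T n. valid_system T \<and> code_sys n T \<longrightarrow>
     (\<exists>k. eval p [n] k \<and> code_asm k (S T)))"

definition computable_R :: "(system \<Rightarrow> block \<Rightarrow> tile option) \<Rightarrow> bool" where
  "computable_R R \<longleftrightarrow> (\<exists>p. \<forall>T n b c. valid_system T \<and> code_sys n T \<and> code_block c b \<longrightarrow>
     eval p [n, c] (enc_opt (R T b)))"

end

theory Submission
  imports Defs
begin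


lemma cut_eq:
  assumes "\<alpha> i = \<beta> k" "\<alpha> (i+1) = \<beta> (k+1)"
  shows "cut_strength \<alpha> i = cut_strength \<beta> k"
  using assms by (simp add: cut_strength_def)

lemma cut_some:
  assumes "\<alpha> i = Some s" "\<alpha> (i+1) = Some t"
  shows "cut_strength \<alpha> i = (if east s = west t then snd (east s) else 0)"
  using assms by (simp add: cut_strength_def)

lemma produces_refl: "produces T \<tau> \<alpha> \<alpha>"
  unfolding produces_def is_limit_def by (rule exI[of _ "\<lambda>_. \<alpha>"]) auto

lemma prod_inv:
  assumes "produces T \<tau> \<sigma> \<beta>" "is_assembly \<sigma>" "ran \<sigma> \<subseteq> T" "tau_stable \<tau> \<sigma>"
  shows "is_assembly \<beta> \<and> ran \<beta> \<subseteq> T \<and> tau_stable \<tau> \<beta> \<and> \<sigma> \<subseteq>\<^sub>m \<beta>"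
proof -
  obtain f where f0: "f 0 = \<sigma>" and fs: "\<And>n. f (Suc n) = f n \<or> lin_step T \<tau> (f n) (f (Suc n))"
    and lim: "is_limit f \<beta>"
    using assms(1) unfolding produces_def by blast
  have mono1: "f n \<subseteq>\<^sub>m f (Suc n)" for n
  proof (cases "f (Suc n) = f n")
    case True then show ?thesis by simp
  next
    case False
    then obtain p t where "f n p = None" "f (Suc n) = (f n)(p \<mapsto> t)"
      using fs[of n] unfolding lin_step_def by blast
    then show ?thesis unfolding map_le_def by auto
  qed
  have mono: "n \<le> k \<Longrightarrow> f n \<subseteq>\<^sub>m f k" for n k
  proof (induction k)
    case 0 then show ?case by simp
  next
    case (Suc k) then show ?case using mono1[of k] map_le_trans by (metis le_Suc_eq map_le_refl)
  qed
  have inv: "is_assembly (f n) \<and> ran (f n) \<subseteq> T \<and> tau_stable \<tau> (f n)" for n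
  proof (induction n)
    case 0 then show ?case using assms f0 by simp
  next
    case (Suc n)
    from fs[of n] show ?case
    proof
      assume "f (Suc n) = f n" then show ?thesis using Suc by simp
    next
      assume "lin_step T \<tau> (f n) (f (Suc n))"
      then obtain p t where "f n p = None" "t \<in> T" "f (Suc n) = (f n)(p \<mapsto> t)"
        "is_assembly (f (Suc n))" "tau_stable \<tau> (f (Suc n))"
        unfolding lin_step_def by blast
      then show ?thesis using Suc ran_map_upd[of "f n" p t] by (metis insert_subset)
    qed
  qed
  have fb: "f n \<subseteq>\<^sub>m \<beta>" for n
    using lim unfolding is_limit_def map_le_def by (metis domD)
  have bf: "\<beta> x = Some t \<Longrightarrow> \<exists>n. f n x = Some t" for x t
  proof -
    assume h: "\<beta> x = Some t"
    then obtain n where "f n x \<noteq> None" using lim unfolding is_limit_def by (metis option.simps(3))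
    then obtain t' where "f n x = Some t'" by blast
    moreover then have "\<beta> x = Some t'" using lim unfolding is_limit_def by blast
    ultimately show ?thesis using h by auto
  qed
  have both: "\<exists>N. x \<in> dom (f N) \<and> z \<in> dom (f N)" if xz: "x \<in> dom \<beta>" "z \<in> dom \<beta>" for x z
  proof -
    obtain n1 n2 where "x \<in> dom (f n1)" "z \<in> dom (f n2)" using bf xz by blast
    then have "x \<in> dom (f (max n1 n2))" "z \<in> dom (f (max n1 n2))"
      using mono map_le_implies_dom_le by (meson max.cobounded1 max.cobounded2 subsetD)+
    then show ?thesis by blast
  qed
  have "\<sigma> \<subseteq>\<^sub>m \<beta>" using fb[of 0] f0 by simp
  moreover have "ran \<beta> \<subseteq> T"
  proof
    fix t assume "t \<in> ran \<beta>"
    then obtain x where "\<beta> x = Some t" by (auto simp: ran_def)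
    then obtain n where "f n x = Some t" using bf by blast
    then show "t \<in> T" using inv[of n] by (auto simp: ran_def)
  qed
  moreover have "is_assembly \<beta>"
    unfolding is_assembly_def
  proof (intro conjI allI impI)
    show "dom \<beta> \<noteq> {}" using map_le_implies_dom_le[OF \<open>\<sigma> \<subseteq>\<^sub>m \<beta>\<close>] assms(2) unfolding is_assembly_def
      by blast
    fix x y z assume h: "x \<in> dom \<beta> \<and> z \<in> dom \<beta> \<and> x \<le> y \<and> y \<le> z"
    then obtain N where "x \<in> dom (f N)" "z \<in> dom (f N)" using both by blast
    then have "y \<in> dom (f N)" using inv[of N] h unfolding is_assembly_def by blast
    then show "y \<in> dom \<beta>" using fb[of N] map_le_implies_dom_le by blast
  qed
  moreover have "tau_stable \<tau> \<beta>"
    unfolding tau_stable_def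
  proof (intro allI impI)
    fix i assume h: "i \<in> dom \<beta> \<and> i + 1 \<in> dom \<beta>"
    then obtain N where N: "i \<in> dom (f N)" "i+1 \<in> dom (f N)" using both by blast
    have "cut_strength \<beta> i = cut_strength (f N) i"
      apply (rule cut_eq) using N fb[of N] unfolding map_le_def by auto
    then show "cut_strength \<beta> i \<ge> \<tau>" using inv[of N] N unfolding tau_stable_def by auto
  qed
  ultimately show ?thesis by blast
qed

lemma ext_producible:
  assumes asm: "is_assembly \<beta>" and sub: "\<sigma> \<subseteq>\<^sub>m \<beta>" and d\<sigma>: "dom \<sigma> = {a..b}" and ab: "a \<le> b"
    and ranb: "ran \<beta> \<subseteq> T" and st: "tau_stable \<tau> \<beta>"
  shows "produces T \<tau> \<sigma> \<beta>"
proof -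
  define lo where "lo n = a - int ((n+1) div 2)" for n :: nat
  define hi where "hi n = b + int (n div 2)" for n :: nat
  define f where "f n = \<beta> |` {lo n..hi n}" for n
  have f0: "f 0 = \<sigma>"
  proof
    fix x show "f 0 x = \<sigma> x"
    proof (cases "x \<in> {a..b}")
      case True
      then have "x \<in> dom \<sigma>" using d\<sigma> by simp
      then show ?thesis using sub True unfolding f_def lo_def hi_def map_le_def by auto
    next
      case False
      then have "\<sigma> x = None" using d\<sigma> by auto
      then show ?thesis using False unfolding f_def lo_def hi_def by auto
    qed
  qed
  have aind: "a \<in> dom \<beta>" using sub d\<sigma> ab map_le_implies_dom_le by fastforce
  have lohi: "lo n \<le> a" "b \<le> hi n" for n unfolding lo_def hi_def by auto
  have ra: "is_assembly (\<beta> |` {l..h})" if "l \<le> a" "b \<le> h" for l h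
    unfolding is_assembly_def
  proof (intro conjI allI impI)
    show "dom (\<beta> |` {l..h}) \<noteq> {}" using aind that ab by auto
    fix x y z assume "x \<in> dom (\<beta> |` {l..h}) \<and> z \<in> dom (\<beta> |` {l..h}) \<and> x \<le> y \<and> y \<le> z"
    then show "y \<in> dom (\<beta> |` {l..h})" using asm unfolding is_assembly_def dom_restrict
      by (metis (no_types, lifting) IntD1 IntD2 IntI atLeastAtMost_iff order_trans)
  qed
  have rs: "tau_stable \<tau> (\<beta> |` A)" for A
    unfolding tau_stable_def
  proof (intro allI impI)
    fix i assume h: "i \<in> dom (\<beta> |` A) \<and> i + 1 \<in> dom (\<beta> |` A)"
    have "cut_strength (\<beta> |` A) i = cut_strength \<beta> i"
      apply (rule cut_eq) using h by (auto simp: restrict_map_def split: if_splits)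
    moreover have "i \<in> dom \<beta> \<and> i+1 \<in> dom \<beta>" using h by (simp add: dom_restrict)
    then have "\<tau> \<le> cut_strength \<beta> i" using st unfolding tau_stable_def by blast
    ultimately show "\<tau> \<le> cut_strength (\<beta> |` A) i" by simp
  qed
  have ev: "even n \<Longrightarrow> lo (Suc n) = lo n - 1 \<and> hi (Suc n) = hi n" for n
    unfolding lo_def hi_def by (auto elim!: evenE)
  have od: "odd n \<Longrightarrow> lo (Suc n) = lo n \<and> hi (Suc n) = hi n + 1" for n
    unfolding lo_def hi_def by (auto elim!: oddE)
  have step: "f (Suc n) = f n \<or> lin_step T \<tau> (f n) (f (Suc n))" for n
  proof -
    define p where "p = (if even n then lo n - 1 else hi n + 1)"
    have I: "{lo (Suc n)..hi (Suc n)} = insert p {lo n..hi n}"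
      using ev[of n] od[of n] lohi[of n] ab unfolding p_def by (cases "even n") auto
    have pn: "p \<notin> {lo n..hi n}" unfolding p_def by auto
    have fS: "f (Suc n) = (f n)(p := \<beta> p)" unfolding f_def using I pn
      by (auto simp: restrict_map_def fun_eq_iff)
    show ?thesis
    proof (cases "\<beta> p")
      case None then show ?thesis using fS pn by (auto simp: f_def fun_eq_iff)
    next
      case (Some t)
      have "lin_step T \<tau> (f n) (f (Suc n))"
        unfolding lin_step_def
      proof (intro exI conjI)
        show "f n p = None" using pn by (simp add: f_def)
        show "t \<in> T" using Some ranb by (auto simp: ran_def)
        show "linear_ok (f n) p" unfolding linear_ok_def
          apply (rule exI[of _ p]) using pn
          by (auto simp: f_def restrict_map_def p_def split: if_splits)
        show "f (Suc n) = (f n)(p \<mapsto> t)" using fS Some by simp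
        show "is_assembly (f (Suc n))" unfolding f_def using ra lohi by blast
        show "tau_stable \<tau> (f (Suc n))" unfolding f_def using rs by blast
      qed
      then show ?thesis by blast
    qed
  qed
  have lim: "is_limit f \<beta>"
    unfolding is_limit_def
  proof (rule allI)
    fix x
    define N where "N = nat (\<bar>x - a\<bar> + \<bar>x - b\<bar>)"
    have "(2 * N + 1) div 2 = N" by simp
    then have LH: "lo (2*N) \<le> x" "x \<le> hi (2*N)" unfolding lo_def hi_def N_def by auto
    then have "f (2*N) x = \<beta> x" by (simp add: f_def)
    then have "(\<beta> x = None) = (\<forall>n. f n x = None)" using LH by (auto simp: f_def restrict_map_def)
    moreover have "\<forall>n t. f n x = Some t \<longrightarrow> \<beta> x = Some t"
      by (auto simp: f_def restrict_map_def split: if_splits)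
    ultimately show "(\<beta> x = None) = (\<forall>n. f n x = None) \<and> (\<forall>n t. f n x = Some t \<longrightarrow> \<beta> x = Some t)" by blast
  qed
  show ?thesis unfolding produces_def using f0 step lim by blast
qed



definition lab :: "nat \<Rightarrow> string" where "lab k = replicate k CHR ''a''"
definition ct :: "nat \<Rightarrow> nat \<Rightarrow> tile" where
  "ct n k = ((lab k, if k = 0 then 0 else 1), (lab (Suc k), if k = n then 0 else 1))"
definition Tn :: "nat \<Rightarrow> system" where "Tn n = (ct n ` {0..n}, [0 \<mapsto> ct n 0], 1)"
definition chain :: "nat \<Rightarrow> assembly" where
  "chain n x = (if 0 \<le> x \<and> x \<le> int n then Some (ct n (nat x)) else None)"

lemma lab_inj: "lab k = lab l \<Longrightarrow> k = l" by (metis lab_def length_replicate)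
lemma west_ct: "west (ct n k) = (lab k, if k = 0 then 0 else 1)" by (simp add: west_def ct_def)
lemma east_ct: "east (ct n k) = (lab (Suc k), if k = n then 0 else 1)" by (simp add: east_def ct_def)

lemma Tn_valid: "valid_system (Tn n)"
  unfolding valid_system_def Tn_def is_assembly_def tau_stable_def by (auto simp: ran_def)

lemma Tn_inv:
  assumes "\<beta> \<in> producible (Tn n)"
  shows "is_assembly \<beta>" "ran \<beta> \<subseteq> ct n ` {0..n}" "tau_stable 1 \<beta>" "\<beta> 0 = Some (ct n 0)"
proof -
  have "produces (ct n ` {0..n}) 1 [0 \<mapsto> ct n 0] \<beta>" using assms by (simp add: producible_def Tn_def)
  moreover have "is_assembly [0 \<mapsto> ct n 0]" "ran [0 \<mapsto> ct n 0] \<subseteq> ct n ` {0..n}" "tau_stable 1 [0 \<mapsto> ct n 0]"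
    using Tn_valid[of n] unfolding valid_system_def Tn_def by auto
  ultimately have "is_assembly \<beta> \<and> ran \<beta> \<subseteq> ct n ` {0..n} \<and> tau_stable 1 \<beta> \<and> [0 \<mapsto> ct n 0] \<subseteq>\<^sub>m \<beta>"
    using prod_inv by blast
  then show "is_assembly \<beta>" "ran \<beta> \<subseteq> ct n ` {0..n}" "tau_stable 1 \<beta>" "\<beta> 0 = Some (ct n 0)"
    by (auto simp: map_le_def)
qed

lemma Tn_prod_dom:
  assumes "\<beta> \<in> producible (Tn n)" shows "dom \<beta> \<subseteq> {0..int n}"
proof -
  note inv = Tn_inv[OF assms]
  have IV: "\<And>a b c. a \<in> dom \<beta> \<Longrightarrow> c \<in> dom \<beta> \<Longrightarrow> a \<le> b \<Longrightarrow> b \<le> c \<Longrightarrow> b \<in> dom \<beta>"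
    using inv(1) unfolding is_assembly_def by blast
  have d0: "0 \<in> dom \<beta>" using inv(4) by blast
  have tile: "\<exists>k\<le>n. t = ct n k" if "\<beta> x = Some t" for x t
  proof -
    have "t \<in> ran \<beta>" using that by (rule ranI)
    then have "t \<in> ct n ` {0..n}" using inv(2) by (rule subsetD[rotated])
    then obtain k where "k \<in> {0..n}" "t = ct n k" by blast
    then show ?thesis by auto
  qed
  have m1: "-1 \<notin> dom \<beta>"
  proof
    assume "-1 \<in> dom \<beta>"
    then obtain t where t: "\<beta> (-1) = Some t" by auto
    have "cut_strength \<beta> (-1) = (if east t = west (ct n 0) then snd (east t) else 0)"
      using cut_some[of \<beta> "-1" t "ct n 0"] t inv(4) by simp
    also have "\<dots> = 0" by (auto simp: west_ct)
    finally have "cut_strength \<beta> (-1) = 0" .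
    moreover have "cut_strength \<beta> (-1) \<ge> 1" using inv(3) t inv(4) unfolding tau_stable_def by force
    ultimately show False by simp
  qed
  have pos: "int k \<in> dom \<beta> \<Longrightarrow> \<beta> (int k) = Some (ct n k) \<and> k \<le> n" for k
  proof (induction k)
    case 0 then show ?case using inv(4) by simp
  next
    case (Suc k)
    have "int k \<in> dom \<beta>" by (rule IV[OF d0 Suc.prems]) auto
    then have IH: "\<beta> (int k) = Some (ct n k)" "k \<le> n" using Suc.IH by auto
    have "\<beta> (int k + 1) \<noteq> None" using Suc.prems by (simp add: domIff add.commute)
    then obtain t where t: "\<beta> (int k + 1) = Some t" by blast
    obtain l where l: "l \<le> n" "t = ct n l" using tile t by blast
    have "cut_strength \<beta> (int k) \<ge> 1" using inv(3) \<open>int k \<in> dom \<beta>\<close> t unfolding tau_stable_def by blast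
    moreover have "cut_strength \<beta> (int k) = (if east (ct n k) = west t then snd (east (ct n k)) else 0)"
      using cut_some[OF IH(1) t] .
    ultimately have E0: "east (ct n k) = west t \<and> snd (east (ct n k)) \<ge> 1"
      by (cases "east (ct n k) = west t") auto
    then have E: "east (ct n k) = west (ct n l)" "k \<noteq> n" using l by (auto simp: east_ct)
    then have "l = Suc k" by (auto simp: east_ct west_ct dest: lab_inj split: if_splits)
    then show ?case using l t IH E by (auto simp: add.commute)
  qed
  show ?thesis
  proof
    fix x assume x: "x \<in> dom \<beta>"
    have "x \<ge> 0"
    proof (rule ccontr)
      assume "\<not> x \<ge> 0"
      then have "-1 \<in> dom \<beta>" by (intro IV[OF x d0]) auto
      then show False using m1 by simp
    qed
    then show "x \<in> {0..int n}" using pos[of "nat x"] x by auto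
  qed
qed

lemma chain_prod: "chain n \<in> producible (Tn n)"
proof -
  have "produces (ct n ` {0..n}) 1 [0 \<mapsto> ct n 0] (chain n)"
  proof (rule ext_producible[where a=0 and b=0])
    have "dom (chain n) = {0..int n}"
    proof (rule set_eqI)
      fix x
      have "chain n x \<noteq> None \<longleftrightarrow> 0 \<le> x \<and> x \<le> int n" unfolding chain_def by (simp del: not_None_eq)
      then show "x \<in> dom (chain n) \<longleftrightarrow> x \<in> {0..int n}" by (simp only: domIff atLeastAtMost_iff)
    qed
    then show "is_assembly (chain n)" unfolding is_assembly_def by auto
    show "[0 \<mapsto> ct n 0] \<subseteq>\<^sub>m chain n" by (simp add: map_le_def chain_def)
    show "dom [0 \<mapsto> ct n 0] = {0..0::int}" by simp
    show "ran (chain n) \<subseteq> ct n ` {0..n}"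
    proof
      fix t assume "t \<in> ran (chain n)"
      then obtain x where x: "chain n x = Some t" unfolding ran_def by blast
      then have "0 \<le> x \<and> x \<le> int n" "t = ct n (nat x)" by (auto simp: chain_def split: if_splits)
      then show "t \<in> ct n ` {0..n}" by (intro image_eqI[of _ _ "nat x"]) auto
    qed
    show "tau_stable 1 (chain n)" unfolding tau_stable_def
    proof (intro allI impI)
      fix i assume h: "i \<in> dom (chain n) \<and> i + 1 \<in> dom (chain n)"
      then have i: "0 \<le> i" "i + 1 \<le> int n" by (auto simp: chain_def split: if_splits)
      have "cut_strength (chain n) i = (if east (ct n (nat i)) = west (ct n (nat (i+1)))
            then snd (east (ct n (nat i))) else 0)"
        by (rule cut_some) (use i in \<open>auto simp: chain_def\<close>)
      also have "\<dots> = 1" using i by (auto simp: east_ct west_ct nat_add_distrib)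
      finally show "1 \<le> cut_strength (chain n) i" by simp
    qed
  qed simp
  then show ?thesis by (simp add: producible_def Tn_def)
qed

lemma seed_prod: "[0 \<mapsto> ct n 0] \<in> producible (Tn n)"
  by (simp add: producible_def Tn_def produces_refl)

lemma block_ran: "ran \<alpha> \<subseteq> U \<Longrightarrow> is_block m U (block_at m \<alpha> x)"
  unfolding is_block_def block_at_def ran_def by auto

lemma Rstar_mono:
  assumes vr: "valid_repr m U R" and le: "\<alpha> \<subseteq>\<^sub>m \<beta>" and rb: "ran \<beta> \<subseteq> U"
  shows "Rstar m R \<alpha> \<subseteq>\<^sub>m Rstar m R \<beta>"
proof -
  have ra: "ran \<alpha> \<subseteq> U" using le rb unfolding map_le_def ran_def by force
  have bl: "block_at m \<alpha> x \<subseteq>\<^sub>m block_at m \<beta> x" for x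
    using le unfolding map_le_def block_at_def by (auto split: if_splits)
  show ?thesis unfolding map_le_def Rstar_def
    using vr block_ran[OF ra] block_ran[OF rb] bl unfolding valid_repr_def by (metis domIff)
qed

definition pump :: "assembly \<Rightarrow> int \<Rightarrow> int \<Rightarrow> assembly" where
  "pump \<beta> i j x = (if x \<le> j then \<beta> x else \<beta> (i + 1 + (x - i - 1) mod (j - i)))"

lemma mod_succ_int: "(0::int) < d \<Longrightarrow> (a + 1) mod d = (if a mod d + 1 < d then a mod d + 1 else 0)"
proof -
  assume d: "0 < d"
  have e: "(a + 1) mod d = (a mod d + 1) mod d" by (simp only: mod_add_left_eq)
  have r: "0 \<le> a mod d" "a mod d < d" using d by auto
  show ?thesis
  proof (cases "a mod d + 1 < d")
    case True
    have "(a mod d + 1) mod d = a mod d + 1" using True r by (intro mod_pos_pos_trivial) auto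
    then show ?thesis using e True by presburger
  next
    case False
    then have "a mod d + 1 = d" using r by simp
    then have "(a mod d + 1) mod d = 0" by simp
    then show ?thesis using e False by presburger
  qed
qed

lemma pump_props:
  assumes asm: "is_assembly \<beta>" and st: "tau_stable \<tau> \<beta>" and rb: "ran \<beta> \<subseteq> U"
    and ij: "i < j" and dij: "{i..j} \<subseteq> dom \<beta>" and eq: "\<beta> i = \<beta> j"
  shows "is_assembly (pump \<beta> i j)" "tau_stable \<tau> (pump \<beta> i j)" "ran (pump \<beta> i j) \<subseteq> U"
    "\<forall>x\<le>j. pump \<beta> i j x = \<beta> x" "\<forall>x>j. x \<in> dom (pump \<beta> i j)"
proof -
  define d where "d = j - i"
  have d0: "d > 0" using ij d_def by simp
  have ge: "pump \<beta> i j x = \<beta> (i + 1 + (x - i - 1) mod d)" if "x \<ge> j" for x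
  proof (cases "x = j")
    case True
    have "(d - 1) mod d = d - 1" using d0 by (intro mod_pos_pos_trivial) auto
    then have "(j - i - 1) mod d = d - 1" by (simp add: d_def)
    then show ?thesis using True eq d_def by (simp add: pump_def)
  next
    case False then show ?thesis using that by (simp add: pump_def d_def)
  qed
  have inr: "i + 1 + (x - i - 1) mod d \<in> {i+1..j}" for x
  proof -
    have "0 \<le> (x - i - 1) mod d" "(x - i - 1) mod d < d" using d0 by auto
    then show ?thesis using d_def by auto
  qed
  show le: "\<forall>x\<le>j. pump \<beta> i j x = \<beta> x" by (simp add: pump_def)
  show gt: "\<forall>x>j. x \<in> dom (pump \<beta> i j)"
  proof (intro allI impI)
    fix x assume "x > j"
    have "{i+1..j} \<subseteq> {i..j}" by auto
    then have "i + 1 + (x - i - 1) mod d \<in> dom \<beta>" using inr[of x] dij by blast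
    then show "x \<in> dom (pump \<beta> i j)" using ge[of x] \<open>x > j\<close> by (metis domIff less_imp_le)
  qed
  show "ran (pump \<beta> i j) \<subseteq> U" using rb unfolding pump_def ran_def by (auto split: if_splits)
  show "is_assembly (pump \<beta> i j)" unfolding is_assembly_def
  proof (intro conjI allI impI)
    have "j + 1 \<in> dom (pump \<beta> i j)" using gt by simp
    then show "dom (pump \<beta> i j) \<noteq> {}" by blast
    fix x y z assume h: "x \<in> dom (pump \<beta> i j) \<and> z \<in> dom (pump \<beta> i j) \<and> x \<le> y \<and> y \<le> z"
    show "y \<in> dom (pump \<beta> i j)"
    proof (cases "y > j")
      case True then show ?thesis using gt by blast
    next
      case False
      then have yj: "y \<le> j" by simp
      then have xb: "x \<in> dom \<beta>" using h le by (metis domIff order_trans)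
      have "y \<in> dom \<beta>"
      proof (cases "z \<le> j")
        case True then have "z \<in> dom \<beta>" using h le by (metis domIff)
        then show ?thesis using asm xb h unfolding is_assembly_def by blast
      next
        case False have "j \<in> {i..j}" using ij by simp
        then have "j \<in> dom \<beta>" using dij by blast
        then show ?thesis using asm xb h yj unfolding is_assembly_def by blast
      qed
      then show ?thesis using le yj by (metis domIff)
    qed
  qed
  show "tau_stable \<tau> (pump \<beta> i j)" unfolding tau_stable_def
  proof (intro allI impI)
    fix y assume h: "y \<in> dom (pump \<beta> i j) \<and> y + 1 \<in> dom (pump \<beta> i j)"
    show "\<tau> \<le> cut_strength (pump \<beta> i j) y"
    proof (cases "y + 1 \<le> j")
      case True
      have "cut_strength (pump \<beta> i j) y = cut_strength \<beta> y"
        by (rule cut_eq) (use True le in auto)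
      moreover have "pump \<beta> i j y = \<beta> y" "pump \<beta> i j (y+1) = \<beta> (y+1)" using le True by auto
      then have "y \<in> dom \<beta> \<and> y + 1 \<in> dom \<beta>" using h by (metis domIff)
      ultimately show ?thesis using st unfolding tau_stable_def by auto
    next
      case False
      then have yj: "y \<ge> j" by simp
      define r where "r = (y - i - 1) mod d"
      have r: "0 \<le> r" "r < d" using d0 r_def by auto
      have py: "pump \<beta> i j y = \<beta> (i + 1 + r)" using ge[OF yj] r_def by simp
      have py1: "pump \<beta> i j (y+1) = \<beta> (i + 1 + (y - i) mod d)" using ge[of "y+1"] yj by simp
      have ms: "(y - i) mod d = (if r + 1 < d then r + 1 else 0)"
        using mod_succ_int[OF d0, of "y - i - 1"] r_def by simp
      show ?thesis
      proof (cases "r + 1 < d")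
        case True
        have "cut_strength (pump \<beta> i j) y = cut_strength \<beta> (i + 1 + r)"
          by (rule cut_eq) (use py py1 ms True in auto)
        moreover have "i + 1 + r \<in> {i..j}" "i + 1 + r + 1 \<in> {i..j}" using r True d_def by auto
        then have "i + 1 + r \<in> dom \<beta>" "i + 1 + r + 1 \<in> dom \<beta>" using dij by blast+
        ultimately show ?thesis using st unfolding tau_stable_def by auto
      next
        case False
        then have "r = d - 1" using r by simp
        then have "pump \<beta> i j y = \<beta> i" using py eq d_def by simp
        moreover have "pump \<beta> i j (y+1) = \<beta> (i + 1)" using py1 ms False by simp
        ultimately have "cut_strength (pump \<beta> i j) y = cut_strength \<beta> i"
          by (intro cut_eq) auto
        moreover have "i \<in> {i..j}" "i + 1 \<in> {i..j}" using ij by auto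
        then have "i \<in> dom \<beta>" "i + 1 \<in> dom \<beta>" using dij by blast+
        ultimately show ?thesis using st unfolding tau_stable_def by auto
      qed
    qed
  qed
qed



lemma finite_interval:
  assumes "is_assembly \<sigma>" "finite (dom \<sigma>)"
  shows "\<exists>a b. a \<le> b \<and> dom \<sigma> = {a..b}"
proof -
  have ne: "dom \<sigma> \<noteq> {}" using assms(1) unfolding is_assembly_def by blast
  define a where "a = Min (dom \<sigma>)"
  define b where "b = Max (dom \<sigma>)"
  have ad: "a \<in> dom \<sigma>" unfolding a_def by (rule Min_in[OF assms(2) ne])
  have bd: "b \<in> dom \<sigma>" unfolding b_def by (rule Max_in[OF assms(2) ne])
  have s1: "dom \<sigma> \<subseteq> {a..b}"
  proof
    fix x assume x: "x \<in> dom \<sigma>"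
    have "a \<le> x" "x \<le> b" using Min_le[OF assms(2) x] Max_ge[OF assms(2) x] a_def b_def by blast+
    then show "x \<in> {a..b}" by (rule atLeastAtMost_iff[THEN iffD2, OF conjI])
  qed
  have s2: "{a..b} \<subseteq> dom \<sigma>"
  proof
    fix y assume "y \<in> {a..b}"
    then have "a \<le> y" "y \<le> b" by simp_all
    have "\<forall>x y z. x \<in> dom \<sigma> \<and> z \<in> dom \<sigma> \<and> x \<le> y \<and> y \<le> z \<longrightarrow> y \<in> dom \<sigma>"
      using assms(1) unfolding is_assembly_def by (rule conjunct2)
    then show "y \<in> dom \<sigma>" using ad bd \<open>a \<le> y\<close> \<open>y \<le> b\<close> by blast
  qed
  have "a \<le> b" using Min_le[OF assms(2) bd] a_def by simp
  moreover have "dom \<sigma> = {a..b}" by (rule equalityI[OF s1 s2])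
  ultimately show ?thesis by blast
qed

theorem mainTheorem8:
  shows "\<not> (\<exists>(U :: tile set) (\<tau>' :: nat) (R :: system \<Rightarrow> block \<Rightarrow> tile option)
              (S :: system \<Rightarrow> assembly).
            finite U \<and> computable_R R \<and> computable_S S \<and>
            (\<forall>T. valid_system T \<longrightarrow>
                 valid_system (U, S T, \<tau>') \<and>
                 (\<exists>m > 0. simulates (U, S T, \<tau>') m (R T) T)))"
proof
  assume "\<exists>(U :: tile set) (\<tau>' :: nat) (R :: system \<Rightarrow> block \<Rightarrow> tile option)
              (S :: system \<Rightarrow> assembly).
            finite U \<and> computable_R R \<and> computable_S S \<and>
            (\<forall>T. valid_system T \<longrightarrow>
                 valid_system (U, S T, \<tau>') \<and>
                 (\<exists>m > 0. simulates (U, S T, \<tau>') m (R T) T))"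
  then obtain U \<tau>' R S where fin: "finite U"
    and H: "\<forall>T. valid_system T \<longrightarrow> valid_system (U, S T, \<tau>') \<and> (\<exists>m>0. simulates (U, S T, \<tau>') m (R T) T)"
    by blast
  define K where "K = card U"
  define n where "n = K + 2"
  define T where "T = Tn n"
  define \<sigma> where "\<sigma> = S T"
  have vT: "valid_system T" using Tn_valid T_def by simp
  obtain m where m0: "m > 0" and sim: "simulates (U, \<sigma>, \<tau>') m (R T) T" and vS: "valid_system (U, \<sigma>, \<tau>')"
    using H vT \<sigma>_def by blast
  define R' where "R' = R T"
  note simc = sim[unfolded simulates_def, folded R'_def]
  have vr: "valid_repr m U R'" using conjunct1[OF simc] by simp
  have img: "Rstar m R' ` producible (U,\<sigma>,\<tau>') = producible T" using conjunct1[OF conjunct2[OF simc]] .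
  have clean: "\<forall>\<alpha>'\<in>producible (U,\<sigma>,\<tau>'). maps_cleanly m R' \<alpha>'"
    using conjunct1[OF conjunct2[OF conjunct2[OF conjunct2[OF simc]]]] .
  have vS': "finite U \<and> is_assembly \<sigma> \<and> finite (dom \<sigma>) \<and> ran \<sigma> \<subseteq> U \<and> tau_stable \<tau>' \<sigma>"
    using vS unfolding valid_system_def by (simp only: prod.case)
  have \<sigma>a: "is_assembly \<sigma>" "finite (dom \<sigma>)" "ran \<sigma> \<subseteq> U" "tau_stable \<tau>' \<sigma>"
    using vS' by blast+
  have PS: "\<alpha>' \<in> producible (U,\<sigma>,\<tau>') \<longleftrightarrow> produces U \<tau>' \<sigma> \<alpha>'" for \<alpha>' by (simp add: producible_def)
  have PSinv: "is_assembly \<alpha>' \<and> ran \<alpha>' \<subseteq> U \<and> tau_stable \<tau>' \<alpha>' \<and> \<sigma> \<subseteq>\<^sub>m \<alpha>'"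
    if "\<alpha>' \<in> producible (U,\<sigma>,\<tau>')" for \<alpha>'
    using prod_inv[OF that[unfolded PS] \<sigma>a(1) \<sigma>a(3) \<sigma>a(4)] .
  have PT: "dom \<beta> \<subseteq> {0..int n}" if "\<beta> \<in> producible T" for \<beta> using Tn_prod_dom T_def that by blast
  have \<sigma>P: "\<sigma> \<in> producible (U,\<sigma>,\<tau>')" by (simp add: PS produces_refl)
  have RsP: "Rstar m R' \<alpha>' \<in> producible T" if "\<alpha>' \<in> producible (U,\<sigma>,\<tau>')" for \<alpha>' using img that by blast
  have ebl: "is_block m U Map.empty" unfolding is_block_def by simp
  have Re: "R' Map.empty = None"
  proof (rule ccontr)
    assume ne: "R' Map.empty \<noteq> None"
    have "R' (block_at m \<sigma> (int n + 1)) = R' Map.empty"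
      using vr[unfolded valid_repr_def, rule_format, of "Map.empty" "block_at m \<sigma> (int n + 1)"]
        block_ran[OF \<sigma>a(3)] ebl ne map_le_empty by blast
    then have "int n + 1 \<in> dom (Rstar m R' \<sigma>)" using ne unfolding Rstar_def by (simp add: domIff)
    then show False using PT[OF RsP[OF \<sigma>P]] by auto
  qed
  have nonempty: "\<exists>i<m. int m * x + int i \<in> dom \<alpha>" if "x \<in> dom (Rstar m R' \<alpha>)" for \<alpha> x
  proof -
    have "R' (block_at m \<alpha> x) \<noteq> None" using that unfolding Rstar_def domIff .
    then have "block_at m \<alpha> x \<noteq> Map.empty" using Re by metis
    have "\<exists>i. block_at m \<alpha> x i \<noteq> None"
    proof (rule ccontr)
      assume "\<not> (\<exists>i. block_at m \<alpha> x i \<noteq> None)"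
      then have "\<forall>i. block_at m \<alpha> x i = None" by blast
      then have "block_at m \<alpha> x = Map.empty" by (simp add: fun_eq_iff)
      then show False using \<open>block_at m \<alpha> x \<noteq> Map.empty\<close> by blast
    qed
    then obtain i where bi: "block_at m \<alpha> x i \<noteq> None" by blast
    then have "i < m" "\<alpha> (int m * x + int i) \<noteq> None" unfolding block_at_def by (auto split: if_splits)
    then show ?thesis using domIff by blast
  qed
  have blk_ne: "block_at m \<alpha> (p div int m) \<noteq> Map.empty" if "p \<in> dom \<alpha>" for \<alpha> p
  proof
    assume e: "block_at m \<alpha> (p div int m) = Map.empty"
    have "nat (p mod int m) < m" using m0 by (simp add: nat_less_iff)
    moreover have "int m * (p div int m) + int (nat (p mod int m)) = p" using m0
      by (simp add: mult.commute)
    ultimately have "block_at m \<alpha> (p div int m) (nat (p mod int m)) = \<alpha> p" unfolding block_at_def by simp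
    then show False using e that by (simp add: domIff)
  qed
  have \<sigma>bound: "p < 2 * int m" if p: "p \<in> dom \<sigma>" for p
  proof -
    have "[0 \<mapsto> ct n 0] \<in> producible T" using seed_prod[of n] unfolding T_def .
    then have "[0 \<mapsto> ct n 0] \<in> Rstar m R' ` producible (U,\<sigma>,\<tau>')" unfolding img .
    then obtain \<alpha>' where \<alpha>'0: "[0 \<mapsto> ct n 0] = Rstar m R' \<alpha>'" "\<alpha>' \<in> producible (U,\<sigma>,\<tau>')"
      by (rule imageE)
    have \<alpha>': "\<alpha>' \<in> producible (U,\<sigma>,\<tau>')" "Rstar m R' \<alpha>' = [0 \<mapsto> ct n 0]" using \<alpha>'0 by simp_all
    have pa: "ran \<alpha>' \<subseteq> U" "\<sigma> \<subseteq>\<^sub>m \<alpha>'" using PSinv[OF \<alpha>'(1)] by blast+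
    have ml: "Rstar m R' \<sigma> \<subseteq>\<^sub>m Rstar m R' \<alpha>'" using Rstar_mono[OF vr pa(2) pa(1)] .
    have sub1: "dom (Rstar m R' \<sigma>) \<subseteq> {0}" using map_le_implies_dom_le[OF ml] \<alpha>'(2) by simp
    have "Rstar m R' \<sigma> 0 = Some (ct n 0)" using Tn_inv(4)[OF RsP[OF \<sigma>P, unfolded T_def]] .
    then have "0 \<in> dom (Rstar m R' \<sigma>)" by blast
    then have "R' (block_at m \<sigma> 0) \<noteq> None" unfolding Rstar_def domIff .
    then have blk0: "block_at m \<sigma> 0 \<noteq> Map.empty" using Re by metis
    define x where "x = p div int m"
    have bx: "block_at m \<sigma> x \<noteq> Map.empty" using blk_ne[OF p] x_def by simp
    have "x \<le> 1"
    proof -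
      have "maps_cleanly m R' \<sigma>" using clean \<sigma>P by blast
      then show ?thesis unfolding maps_cleanly_def
      proof
        assume "\<forall>x. block_at m \<sigma> x \<noteq> Map.empty \<longrightarrow> (\<exists>y\<in>{x - 1, x, x + 1}. y \<in> dom (Rstar m R' \<sigma>))"
        then obtain y where "y \<in> {x - 1, x, x + 1}" "y \<in> dom (Rstar m R' \<sigma>)" using bx by blast
        moreover then have "y = 0" using sub1 by blast
        ultimately show ?thesis by auto
      next
        assume "\<forall>x y. block_at m \<sigma> x \<noteq> Map.empty \<and> block_at m \<sigma> y \<noteq> Map.empty \<longrightarrow> x = y"
        then have "x = 0" using bx blk0 by blast
        then show ?thesis by simp
      qed
    qed
    have "p = int m * x + p mod int m" using x_def by simp
    moreover have "p mod int m < int m" using m0 by simp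
    moreover have "int m * x \<le> int m * 1" using \<open>x \<le> 1\<close> by (intro mult_left_mono) auto
    ultimately show ?thesis by linarith
  qed
  have "chain n \<in> producible T" using chain_prod[of n] unfolding T_def .
  then have "chain n \<in> Rstar m R' ` producible (U,\<sigma>,\<tau>')" unfolding img .
  then obtain \<beta>' where \<beta>'0: "chain n = Rstar m R' \<beta>'" "\<beta>' \<in> producible (U,\<sigma>,\<tau>')"
    by (rule imageE)
  have \<beta>': "\<beta>' \<in> producible (U,\<sigma>,\<tau>')" "Rstar m R' \<beta>' = chain n" using \<beta>'0 by simp_all
  note \<beta>i = PSinv[OF \<beta>'(1)]
  have "chain n (int n) = Some (ct n n)" by (simp add: chain_def)
  then have "int n \<in> dom (chain n)" by (rule domI)
  then have "int n \<in> dom (Rstar m R' \<beta>')" unfolding \<beta>'(2) .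
  then obtain i0 where i0: "i0 < m" "int m * int n + int i0 \<in> dom \<beta>'" using nonempty by blast
  obtain s where s: "s \<in> dom \<sigma>" using \<sigma>a(1) unfolding is_assembly_def by blast
  have sb: "s \<in> dom \<beta>'" using s \<beta>i map_le_implies_dom_le by blast
  have s2: "s < 2 * int m" using \<sigma>bound s by blast
  have "1 * int K \<le> int m * int K" using m0 by (intro mult_right_mono) auto
  then have "int m * int K \<ge> int K" by simp
  then have big: "2 * int m + int K \<le> int m * int n + int i0" unfolding n_def by (simp add: algebra_simps)
  have IVb: "\<And>a b c. a \<in> dom \<beta>' \<Longrightarrow> c \<in> dom \<beta>' \<Longrightarrow> a \<le> b \<Longrightarrow> b \<le> c \<Longrightarrow> b \<in> dom \<beta>'"
    using \<beta>i unfolding is_assembly_def by blast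
  have rng: "y \<in> dom \<beta>'" if "2 * int m \<le> y" "y \<le> 2 * int m + int K" for y
    by (rule IVb[OF sb i0(2)]) (use that s2 big in linarith)+
  define g where "g k = the (\<beta>' (2 * int m + int k))" for k
  have gU: "g ` {0..K} \<subseteq> U"
  proof
    fix t assume "t \<in> g ` {0..K}"
    then obtain k where k: "k \<le> K" "t = g k" by auto
    have "2 * int m + int k \<in> dom \<beta>'" using rng k by simp
    then obtain t' where "\<beta>' (2 * int m + int k) = Some t'" by (blast dest: domD)
    then have "\<beta>' (2 * int m + int k) = Some t" using k g_def by simp
    then have "t \<in> ran \<beta>'" by (rule ranI)
    then show "t \<in> U" using \<beta>i by blast
  qed
  have "\<not> inj_on g {0..K}"
  proof
    assume "inj_on g {0..K}"
    then have "card (g ` {0..K}) = K + 1" by (simp add: card_image)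
    moreover have "card (g ` {0..K}) \<le> K" using card_mono[OF fin gU] K_def by simp
    ultimately show False by simp
  qed
  then obtain k1 k2 where k: "k1 \<in> {0..K}" "k2 \<in> {0..K}" "k1 \<noteq> k2" "g k1 = g k2"
    unfolding inj_on_def by blast
  obtain a b where ab: "a < b" "b \<le> K" "g a = g b"
  proof (cases "k1 < k2")
    case True then show ?thesis using that k by auto
  next
    case False then show ?thesis using that[of k2 k1] k by auto
  qed
  define i where "i = 2 * int m + int a"
  define j where "j = 2 * int m + int b"
  have ij: "i < j" using ab i_def j_def by simp
  have dij: "{i..j} \<subseteq> dom \<beta>'"
  proof
    fix y assume "y \<in> {i..j}"
    then show "y \<in> dom \<beta>'" using rng i_def j_def ab by simp
  qed
  have "i \<in> {i..j}" "j \<in> {i..j}" using ij by auto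
  then have "i \<in> dom \<beta>'" "j \<in> dom \<beta>'" using dij by blast+
  then obtain ti tj where "\<beta>' i = Some ti" "\<beta>' j = Some tj" by (blast dest: domD)
  then have eq: "\<beta>' i = \<beta>' j" using ab(3) g_def i_def j_def by simp
  define \<gamma> where "\<gamma> = pump \<beta>' i j"
  note pp = pump_props[OF conjunct1[OF \<beta>i] conjunct1[OF conjunct2[OF conjunct2[OF \<beta>i]]]
    conjunct1[OF conjunct2[OF \<beta>i]] ij dij eq]
  have \<sigma>\<gamma>: "\<sigma> \<subseteq>\<^sub>m \<gamma>"
    unfolding map_le_def
  proof (intro ballI)
    fix x assume x: "x \<in> dom \<sigma>"
    then have "x < 2 * int m" using \<sigma>bound by blast
    then have "x \<le> j" using j_def by simp
    then have "\<gamma> x = \<beta>' x" using pp(4) \<gamma>_def by simp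
    then show "\<sigma> x = \<gamma> x" using \<beta>i x unfolding map_le_def by simp
  qed
  obtain a0 b0 where ab0: "a0 \<le> b0" "dom \<sigma> = {a0..b0}" using finite_interval \<sigma>a by blast
  have \<gamma>P: "\<gamma> \<in> producible (U,\<sigma>,\<tau>')"
    unfolding PS \<gamma>_def
    using ext_producible[OF pp(1) \<sigma>\<gamma>[unfolded \<gamma>_def] ab0(2) ab0(1) pp(3) pp(2)] .
  have cl: "maps_cleanly m R' \<gamma>" using clean \<gamma>P by blast
  have d\<gamma>: "dom (Rstar m R' \<gamma>) \<subseteq> {0..int n}" using PT[OF RsP[OF \<gamma>P]] .
  have j0: "j \<ge> 0" using j_def by simp
  define x where "x = j + int n + 2"
  have bx: "block_at m \<gamma> y \<noteq> Map.empty" if "y \<ge> x" for y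
  proof -
    have "int m * y \<ge> 1 * y" using m0 that x_def j0 by (intro mult_right_mono) auto
    then have "int m * y > j" using that x_def j0 by linarith
    then have "int m * y + int 0 > j" by simp
    then have "int m * y + int 0 \<in> dom \<gamma>" using pp(5) \<gamma>_def by blast
    then have "block_at m \<gamma> y 0 \<noteq> None" unfolding block_at_def using m0 by (simp add: domIff)
    then show ?thesis by (metis option.simps(3))
  qed
  show False using cl unfolding maps_cleanly_def
  proof
    assume "\<forall>x. block_at m \<gamma> x \<noteq> Map.empty \<longrightarrow> (\<exists>y\<in>{x - 1, x, x + 1}. y \<in> dom (Rstar m R' \<gamma>))"
    then obtain y where "y \<in> {x - 1, x, x + 1}" "y \<in> dom (Rstar m R' \<gamma>)" using bx[of x] by blast
    then have "y \<in> {0..int n}" using d\<gamma> by blast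
    then show False using \<open>y \<in> {x - 1, x, x + 1}\<close> x_def j0 by auto
  next
    assume "\<forall>xa y. block_at m \<gamma> xa \<noteq> Map.empty \<and> block_at m \<gamma> y \<noteq> Map.empty \<longrightarrow> xa = y"
    moreover have "block_at m \<gamma> x \<noteq> Map.empty" "block_at m \<gamma> (x+1) \<noteq> Map.empty" using bx by simp_all
    ultimately have "x = x + 1" by blast
    then show False by simp
  qed
qed

end
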